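(* Let $q>1$, $p=\frac{q}{q-1}$, and assume Hypothesis (H$_q$). Then for every $\theta>0$, $$\Big|\frac16\Big[f(ma)+4f\Big(\frac{m(a+b)}{2}\Big)+f(mb)\Big]-\frac{\Gamma(\theta+1)2^{\theta-1}}{m^\theta(b-a)^\theta}\Big[J^\theta_{(\frac{m(a+b)}{2})^-}f(ma)+J^\theta_{(\frac{m(a+b)}{2})^+}f(mb)\Big]\Big|$$ $$\le\frac{m(b-a)}{4}A_4\big(\theta,\tfrac13,p\big)^{\frac1p}\Big\{\Big(\frac{|f'(\frac{m(a+b)}2)|^q+\alpha m|f'(a)|^q}{\alpha+1}\Big)^{\frac1q}+\Big(\frac{|f'(\frac{m(a+b)}2)|^q+\alpha m|f'(b)|^q}{\alpha+1}\Big)^{\frac1q}\Big\}.$$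
   Context: Let $\Gamma$ denote Euler's Gamma function. For $\theta>0$, $c=\frac{m(a+b)}{2}$: $J^\theta_{c^-}f(ma)=\frac{1}{\Gamma(\theta)}\int_{ma}^{c}(s-ma)^{\theta-1}f(s)\,ds$ and $J^\theta_{c^+}f(mb)=\frac{1}{\Gamma(\theta)}\int_{c}^{mb}(mb-s)^{\theta-1}f(s)\,ds$. $(\alpha,m)$-convexity: for $(\alpha,m)\in[0,1]\times(0,1]$ and an interval $K\subseteq[0,\infty)$, a function $g:K\to\mathbb{R}$ is $(\alpha,m)$-convex on $K$ if $g(tX+m(1-t)Y)\le t^\alpha g(X)+m(1-t^\alpha)g(Y)$ for all $X,Y\in K$ and $t\in[0,1]$ with $tX+m(1-t)Y\in K$ (convention $0^0=1$). Hypothesis (H$_q$): $I\subseteq[0,\infty)$ is an interval, $f:I\to\mathbb{R}$ is differentiable on the interior $I^\circ$, $m\in(0,1]$, $\alpha\in[0,1]$, $a<b$ with $ma,b\in I^\circ$, $f'$ is Lebesgue integrable on $[ma,mb]$, and $|f'|^q$ is $(\alpha,m)$-convex on $[ma,b]$. $\beta(u,v)=\int_0^1t^{u-1}(1-t)^{v-1}dt$ ($u,v>0$) is the Beta function and ${}_2F_1(a',b';c';z)=\frac{1}{\beta(b',c'-b')}\int_0^1t^{b'-1}(1-t)^{c'-b'-1}(1-zt)^{-a'}dt$ ($c'>b'>0$, $|z|<1$) the hypergeometric function. For $\theta>0$, $p>1$ and $0<\lambda<1$: $A_4(\theta,\lambda,p)=\frac{\lambda^{\frac{\theta p+1}{\theta}}}{\theta}\Big\{\beta\big(\tfrac1\theta,p+1\big)+\frac{(1-\lambda)^{p+1}}{p+1}\,{}_2F_1\big(\tfrac1\theta+p+1,\,p+1;\,p+2;\,1-\lambda\big)\Big\}$.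 *)

theory Defs
  imports "HOL-Analysis.Analysis"
begin

text \<open>Power t^alpha with the convention 0^0 = 1 (Isabelle's powr has 0 powr 0 = 0).\<close>
definition pow0 :: "real \<Rightarrow> real \<Rightarrow> real" where
  "pow0 t \<alpha> = (if t = 0 then (if \<alpha> = 0 then 1 else 0) else t powr \<alpha>)"

definition alpha_m_convex :: "real \<Rightarrow> real \<Rightarrow> real set \<Rightarrow> (real \<Rightarrow> real) \<Rightarrow> bool" where
  "alpha_m_convex \<alpha> m K g \<longleftrightarrow>
     (\<forall>X\<in>K. \<forall>Y\<in>K. \<forall>t\<in>{0..1}. t * X + m * (1 - t) * Y \<in> K \<longrightarrow>
        g (t * X + m * (1 - t) * Y) \<le> pow0 t \<alpha> * g X + m * (1 - pow0 t \<alpha>) * g Y)"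

definition RL_left :: "real \<Rightarrow> real \<Rightarrow> (real \<Rightarrow> real) \<Rightarrow> real \<Rightarrow> real" where
  "RL_left \<theta> c f x = (LBINT s:{x..c}. (s - x) powr (\<theta> - 1) * f s) / Gamma \<theta>"

definition RL_right :: "real \<Rightarrow> real \<Rightarrow> (real \<Rightarrow> real) \<Rightarrow> real \<Rightarrow> real" where
  "RL_right \<theta> c f y = (LBINT s:{c..y}. (y - s) powr (\<theta> - 1) * f s) / Gamma \<theta>"

text \<open>Gauss hypergeometric function via Euler's integral representation.\<close>
definition hyp2F1 :: "real \<Rightarrow> real \<Rightarrow> real \<Rightarrow> real \<Rightarrow> real" where
  "hyp2F1 a' b' c' z =
     (LBINT t:{0..1}. t powr (b' - 1) * (1 - t) powr (c' - b' - 1) * (1 - z * t) powr (- a'))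
       / Beta b' (c' - b')"

definition A4 :: "real \<Rightarrow> real \<Rightarrow> real \<Rightarrow> real" where
  "A4 \<theta> lam p = lam powr ((\<theta> * p + 1) / \<theta>) / \<theta> *
     (Beta (1 / \<theta>) (p + 1) +
      (1 - lam) powr (p + 1) / (p + 1) * hyp2F1 (1 / \<theta> + p + 1) (p + 1) (p + 2) (1 - lam))"

end

theory Submission
  imports Defs
begin

lemma holder01:
  fixes u v :: "real \<Rightarrow> real" and p q :: real and S :: "real set"
  assumes pq: "p > 1" "q > 1" "1/p + 1/q = 1"
    and nn: "\<And>t. t \<in> S \<Longrightarrow> 0 \<le> u t" "\<And>t. t \<in> S \<Longrightarrow> 0 \<le> v t"
    and iu: "(\<lambda>t. u t powr p) integrable_on S"
    and iv: "(\<lambda>t. v t powr q) integrable_on S"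
    and iuv: "(\<lambda>t. u t * v t) integrable_on S"
  shows "integral S (\<lambda>t. u t * v t) \<le> integral S (\<lambda>t. u t powr p) powr (1/p) * integral S (\<lambda>t. v t powr q) powr (1/q)"
proof -
  define P where "P = integral S (\<lambda>t. u t powr p)"
  define Q where "Q = integral S (\<lambda>t. v t powr q)"
  define X where "X = integral S (\<lambda>t. u t * v t)"
  have P0: "P \<ge> 0" unfolding P_def by (rule integral_nonneg[OF iu]) simp
  have Q0: "Q \<ge> 0" unfolding Q_def by (rule integral_nonneg[OF iv]) simp
  have key: "X \<le> s powr p * P / p + s powr (-q) * Q / q" if s: "s > 0" for s
  proof -
    have "X \<le> integral S (\<lambda>t. s powr p / p * u t powr p + s powr (-q) / q * v t powr q)"
      unfolding X_def
    proof (rule integral_le[OF iuv])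
      show "(\<lambda>t. s powr p / p * u t powr p + s powr (-q) / q * v t powr q) integrable_on S"
        using integrable_cmul[OF iu, of "s powr p / p"] integrable_cmul[OF iv, of "s powr (-q) / q"] by (intro integrable_add) auto
      fix t assume t: "t \<in> S"
      have "u t * v t = (s * u t) * (v t / s)" using s by simp
      also have "\<dots> \<le> (s * u t) powr p / p + (v t / s) powr q / q"
        by (rule Youngs_inequality) (use pq nn[OF t] s in auto)
      also have "\<dots> = s powr p / p * u t powr p + s powr (-q) / q * v t powr q"
        using s nn[OF t] by (simp add: powr_mult powr_divide powr_minus_divide field_simps)
      finally show "u t * v t \<le> s powr p / p * u t powr p + s powr (-q) / q * v t powr q" .
    qed
    also have "\<dots> = s powr p * P / p + s powr (-q) * Q / q"
      unfolding P_def Q_def using iu iv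
      using integrable_cmul[OF iu, of "s powr p / p"] integrable_cmul[OF iv, of "s powr (-q) / q"] by (subst integral_add) auto
    finally show ?thesis .
  qed
  have pq2: "p + q = p * q" using pq by (simp add: field_simps)
  have ip: "1/p = 1 - 1/q" using pq by simp
  show ?thesis
  proof (cases "P = 0 \<or> Q = 0")
    case True
    have "X \<le> 0"
    proof (rule ccontr)
      assume "\<not> X \<le> 0" hence X: "X > 0" by simp
      show False
      proof (cases "P = 0")
        case True
        define s where "s = (Q / (q * X) + 1) powr (1/q)"
        have qq: "Q / (q * X) \<ge> 0" using Q0 X pq by simp
        hence s0: "s > 0" unfolding s_def by simp
        from qq have "s powr q = Q / (q * X) + 1" unfolding s_def using pq
          by (subst powr_powr) auto
        hence "Q < X * q * s powr q" using X pq by (simp add: field_simps)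
        moreover have "s powr q > 0" using s0 by simp
        ultimately have "s powr (-q) * Q / q < X" using pq
          by (simp add: powr_minus divide_simps mult_ac)
        with key[OF s0] True show False by simp
      next
        case False
        with True have Q: "Q = 0" by simp
        define s where "s = (p * X / (P + 1)) powr (1/p)"
        have s0: "s > 0" unfolding s_def using P0 X pq by auto
        have "s powr p = p * X / (P + 1)" unfolding s_def using P0 X pq
          by (subst powr_powr) auto
        hence e: "s powr p * (P + 1) = p * X" using P0 by (simp add: field_simps)
        have sp: "s powr p > 0" using s0 by simp
        have "s powr p * P < p * X" using e sp by (simp only: algebra_simps)
        hence "s powr p * P / p < X" using pq by (simp add: field_simps) 
        with key[OF s0] Q show False by simp
      qed
    qed
    thus ?thesis using True unfolding X_def P_def Q_def by auto
  next
    case False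
    hence P: "P > 0" and Q: "Q > 0" using P0 Q0 by auto
    define s where "s = (Q / P) powr (1/(p+q))"
    have s0: "s > 0" unfolding s_def using P Q by auto
    have "s powr p = (Q/P) powr (1/q)" unfolding s_def using P Q pq pq2
      by (subst powr_powr) (simp add: field_simps)
    hence 1: "s powr p * P = P powr (1/p) * Q powr (1/q)" using P Q
      by (simp add: powr_divide ip powr_diff field_simps)
    have "s powr (-q) = (Q/P) powr (-(1/p))" unfolding s_def using P Q pq pq2
      by (subst powr_powr) (simp add: field_simps)
    hence 2: "s powr (-q) * Q = P powr (1/p) * Q powr (1/q)" using P Q
      by (simp add: powr_divide powr_minus ip powr_diff field_simps)
    have "X \<le> s powr p * P / p + s powr (-q) * Q / q" by (rule key[OF s0])
    also have "\<dots> = P powr (1/p) * Q powr (1/q) * (1/p + 1/q)"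
      using 1 2 by (simp add: field_simps)
    finally show ?thesis using pq unfolding X_def P_def Q_def by simp
  qed
qed

lemma lborel_set_eq_integral:
  fixes f :: "real \<Rightarrow> real"
  assumes ai: "f absolutely_integrable_on S"
    and meas: "(\<lambda>x. indicator S x * f x) \<in> borel_measurable borel"
  shows "(LBINT x:S. f x) = integral S f" "set_integrable lborel S f"
proof -
  have "integrable lebesgue (\<lambda>x. indicator S x *\<^sub>R f x)"
    using ai unfolding set_integrable_def .
  moreover have "(\<lambda>x. indicator S x *\<^sub>R f x) \<in> borel_measurable lborel"
    using meas by simp
  ultimately have "integrable lborel (\<lambda>x. indicator S x *\<^sub>R f x)"
    using integrable_completion by blast
  thus si: "set_integrable lborel S f" unfolding set_integrable_def .
  show "(LBINT x:S. f x) = integral S f" by (rule set_borel_integral_eq_integral(2)[OF si])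
qed

lemma cont_abs_powr:
  assumes "\<theta> > 0" "p > 0"
  shows "continuous_on {0..} (\<lambda>t::real. \<bar>t powr \<theta> - l\<bar> powr p)"
  using assms by (intro continuous_on_powr' continuous_intros) auto

lemma piece1:
  fixes l \<theta> p :: real
  assumes \<theta>: "\<theta> > 0" and p: "p > 0" and l: "0 < l" "l < 1"
  defines "\<mu> \<equiv> l powr (1/\<theta>)"
  shows "((\<lambda>t. \<bar>t powr \<theta> - l\<bar> powr p) has_integral
           (l powr (1/\<theta> + p) / \<theta> * Beta (1/\<theta>) (p+1))) {0..\<mu>}"
proof -
  let ?F = "\<lambda>t. \<bar>t powr \<theta> - l\<bar> powr p"
  have mu0: "\<mu> > 0" unfolding \<mu>_def using l by simp
  have mut: "\<mu> powr \<theta> = l" unfolding \<mu>_def using l \<theta> by (simp add: powr_powr)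
  define g where "g = (\<lambda>s::real. \<mu> * s powr (1/\<theta>))"
  define g' where "g' = (\<lambda>s::real. \<mu> * ((1/\<theta>) * s powr (1/\<theta> - 1)))"
  have contF: "continuous_on {0..\<mu>} ?F"
    by (rule continuous_on_subset[OF cont_abs_powr[OF \<theta> p]]) auto
  have sub: "((\<lambda>x. g' x *\<^sub>R ?F (g x)) has_integral (integral {g 0..g 1} ?F - integral {g 1..g 0} ?F)) {0..1}"
  proof (rule has_integral_substitution_general[of "{0}" 0 1 g 0 \<mu>])
    show "g ` {0..1} \<subseteq> {0..\<mu>}"
    proof
      fix y assume "y \<in> g ` {0..1}"
      then obtain s where s: "s \<in> {0..1}" "y = g s" by auto
      have "s powr (1/\<theta>) \<le> 1" using s \<theta> by (intro powr_le1) auto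
      thus "y \<in> {0..\<mu>}" using s mu0 unfolding g_def by (auto intro: mult_left_le)
    qed
    show "continuous_on {0..1} g" unfolding g_def
      by (intro continuous_on_mult continuous_on_const continuous_on_powr' continuous_on_id) (use \<theta> in auto)
    show "(g has_field_derivative g' x) (at x within {0..1})" if "x \<in> {0..1} - {0}" for x
      unfolding g_def g'_def
      by (rule has_field_derivative_at_within, rule DERIV_cmult, rule has_real_derivative_powr) (use that in auto)
  qed (use contF in auto)
  have g0: "g 0 = 0" "g 1 = \<mu>" unfolding g_def by auto
  have sub2: "((\<lambda>x. g' x * ?F (g x)) has_integral integral {0..\<mu>} ?F) {0..1}"
    using sub mu0 by (simp add: g0)
  have eq: "g' x * ?F (g x) = (l powr (1/\<theta> + p) / \<theta>) * (x powr (1/\<theta> - 1) * (1 - x) powr (p + 1 - 1))"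
    if x: "x \<in> {0..1}" for x
  proof (cases "x = 0")
    case True thus ?thesis by (simp add: g'_def)
  next
    case False
    hence x0: "x > 0" using x by auto
    have "g x powr \<theta> = l * x" unfolding g_def using mu0 x0 \<theta>
      by (simp add: powr_mult powr_powr mut)
    moreover have "l * x \<le> l" using x l by (simp add: mult_left_le)
    ultimately have "\<bar>g x powr \<theta> - l\<bar> = l * (1 - x)" by (simp add: algebra_simps)
    hence "?F (g x) = l powr p * (1 - x) powr p" using x l
      by (simp add: powr_mult)
    thus ?thesis unfolding g'_def \<mu>_def using l
      by (simp add: powr_add field_simps)
  qed
  have "((\<lambda>x. (l powr (1/\<theta> + p) / \<theta>) * (x powr (1/\<theta> - 1) * (1 - x) powr (p + 1 - 1)))
          has_integral (l powr (1/\<theta> + p) / \<theta>) * Beta (1/\<theta>) (p+1)) {0..1}"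
    by (intro has_integral_mult_right has_integral_Beta_real) (use \<theta> p in auto)
  hence "((\<lambda>x. g' x * ?F (g x)) has_integral (l powr (1/\<theta> + p) / \<theta>) * Beta (1/\<theta>) (p+1)) {0..1}"
    by (rule has_integral_eq[rotated]) (use eq in auto)
  hence "integral {0..\<mu>} ?F = l powr (1/\<theta> + p) / \<theta> * Beta (1/\<theta>) (p+1)"
    using sub2 has_integral_unique by blast
  moreover have "?F integrable_on {0..\<mu>}" using contF integrable_continuous_real by blast
  ultimately show ?thesis using has_integral_integral by metis
qed

lemma alg:
  fixes Dx D1 Dp l \<theta> Ml L1 Lp Mp Xp :: real
  assumes "Dx > 0" "D1 > 0" "Dp > 0" "l > 0" "\<theta> > 0"
  shows "(1/\<theta>) * (L1*Dx/(l*D1)) * (l*Ml/Dx^2) * (Lp*Mp*Xp/Dp) = L1*Lp/\<theta> * (Mp*Ml) * (Xp*1*(1/(D1*Dp*Dx)))"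
  using assms by (simp add: field_simps power2_eq_square)

lemma piece2:
  fixes l \<theta> p :: real
  assumes \<theta>: "\<theta> > 0" and p: "p > 0" and l: "0 < l" "l < 1"
  defines "\<mu> \<equiv> l powr (1/\<theta>)"
  defines "H \<equiv> (\<lambda>t::real. t powr (p + 1 - 1) * (1 - t) powr (p + 2 - (p + 1) - 1)
                     * (1 - (1 - l) * t) powr (- (1/\<theta> + p + 1)))"
  shows "((\<lambda>x. l powr (1/\<theta> + p) / \<theta> * (1-l) powr (p+1) * H x) has_integral
           integral {\<mu>..1} (\<lambda>t. \<bar>t powr \<theta> - l\<bar> powr p)) {0..1}"
    "\<mu> \<le> 1"
proof -
  let ?F = "\<lambda>t. \<bar>t powr \<theta> - l\<bar> powr p"
  let ?D = "\<lambda>x::real. 1 - (1 - l) * x"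
  have mu0: "\<mu> > 0" unfolding \<mu>_def using l by simp
  show mu1: "\<mu> \<le> 1" unfolding \<mu>_def using l \<theta> by (intro powr_le1) auto
  have Dpos: "?D x \<ge> l" "?D x > 0" "?D x \<le> 1" if "x \<in> {0..1}" for x
  proof -
    have a: "(1 - l) * x \<le> 1 - l" using that l by (intro mult_left_le) auto
    have b: "(1 - l) * x \<ge> 0" using that l by auto
    from a b l show "?D x \<ge> l" by linarith
    from a b l show "?D x > 0" by linarith
    from a b l show "?D x \<le> 1" by linarith
  qed
  define g where "g = (\<lambda>x. (l / ?D x) powr (1/\<theta>))"
  define m where "m = (\<lambda>x. l * (1 - l) / (?D x)^2)"
  define g' where "g' = (\<lambda>x. (1/\<theta>) * (l / ?D x) powr (1/\<theta> - of_nat 1) * m x)"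
  have contF: "continuous_on {\<mu>..1} ?F"
    by (rule continuous_on_subset[OF cont_abs_powr[OF \<theta> p]]) (use mu0 in auto)
  have dD: "((\<lambda>x. l / ?D x) has_real_derivative m x) (at x)" if "x \<in> {0..1}" for x
    using Dpos[OF that] unfolding m_def
    by (auto intro!: derivative_eq_intros simp: field_simps power2_eq_square)
  have sub: "((\<lambda>x. g' x *\<^sub>R ?F (g x)) has_integral (integral {g 0..g 1} ?F - integral {g 1..g 0} ?F)) {0..1}"
  proof (rule has_integral_substitution_general[of "{}" 0 1 g \<mu> 1])
    show "g ` {0..1} \<subseteq> {\<mu>..1}"
    proof
      fix y assume "y \<in> g ` {0..1}"
      then obtain s where s: "s \<in> {0..1}" "y = g s" by auto
      have "l \<le> l / ?D s" using Dpos[OF s(1)] l by (simp add: field_simps)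
      moreover have "l / ?D s \<le> 1" using Dpos[OF s(1)] l by (simp add: field_simps)
      moreover have "l / ?D s \<ge> 0" using Dpos[OF s(1)] l by simp
      ultimately have "\<mu> \<le> y" "y \<le> 1" using s l \<theta> Dpos[OF s(1)] unfolding g_def \<mu>_def
        by (auto intro!: powr_mono2 powr_le1)
      thus "y \<in> {\<mu>..1}" by simp
    qed
    show "continuous_on {0..1} g" unfolding g_def
      by (intro continuous_on_powr' continuous_on_divide continuous_on_const continuous_on_diff
            continuous_on_mult continuous_on_id) (use Dpos \<theta> l in force)+
    show "(g has_field_derivative g' x) (at x within {0..1})" if "x \<in> {0..1} - {}" for x
      unfolding g_def g'_def
      by (rule has_field_derivative_at_within, rule DERIV_fun_powr[OF dD]) (use that Dpos[of x] l in auto)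
  qed (use contF in auto)
  have g0: "g 0 = \<mu>" "g 1 = 1" unfolding g_def \<mu>_def using l by auto
  have sub2: "((\<lambda>x. g' x * ?F (g x)) has_integral integral {\<mu>..1} ?F) {0..1}"
    using sub mu1 by (cases "\<mu> = 1") (auto simp: g0)
  have eq: "g' x * ?F (g x) = l powr (1/\<theta> + p) / \<theta> * (1-l) powr (p+1) * H x"
    if x: "x \<in> {0..1} - {1}" for x
  proof (cases "x = 0")
    case True
    have "?F (g 0) = 0" using mu0 \<theta> l by (simp add: g0 \<mu>_def powr_powr)
    thus ?thesis using True p by (simp add: H_def)
  next
    case False
    hence x0: "0 < x" "x < 1" using x by auto
    have D: "?D x > 0" using Dpos x by auto
    have "g x powr \<theta> = l / ?D x" unfolding g_def using D l \<theta> by (simp add: powr_powr)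
    moreover have "l / ?D x - l = l * (1 - l) * x / ?D x" using D by (simp add: field_simps)
    moreover have "l * (1 - l) * x / ?D x > 0" using D l x0 by simp
    ultimately have F: "?F (g x) = l powr p * (1 - l) powr p * x powr p / ?D x powr p"
      using l x0 D by (simp add: powr_mult powr_divide)
    have e1: "(l / ?D x) powr (1/\<theta> - of_nat 1) = l powr (1/\<theta>) * ?D x / (l * ?D x powr (1/\<theta>))"
      using l D by (simp add: powr_divide powr_diff)
    have e2: "l powr (1/\<theta> + p) = l powr (1/\<theta>) * l powr p" by (simp add: powr_add)
    have e3: "(1-l) powr (p+1) = (1-l) powr p * (1 - l)" using l by (simp add: powr_add)
    have e4a: "?D x powr (1/\<theta> + p + 1) = ?D x powr (1/\<theta>) * ?D x powr p * ?D x"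
      using D by (simp add: powr_add)
    have e4: "?D x powr (- (1/\<theta> + p + 1)) = 1 / (?D x powr (1/\<theta>) * ?D x powr p * ?D x)"
      unfolding powr_minus e4a by (simp add: divide_inverse)
    have e5: "(1 - x) powr (p + 2 - (p + 1) - 1) = 1" using x0 by simp
    have e6: "x powr (p + 1 - 1) = x powr p" by simp
    show ?thesis
      unfolding g'_def m_def H_def F e1 e2 e3 e4 e5 e6
      by (rule alg) (use l D \<theta> in auto)
  qed
  show "((\<lambda>x. l powr (1/\<theta> + p) / \<theta> * (1-l) powr (p+1) * H x) has_integral
           integral {\<mu>..1} ?F) {0..1}"
    by (rule has_integral_spike_finite[OF _ _ sub2, of "{1}"]) (use eq in auto)
qed

lemma Beta_a1: assumes "a > 0" shows "Beta a 1 = 1 / (a::real)"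
proof -
  have "a \<notin> \<int>\<^sub>\<le>\<^sub>0" using assms by (auto elim!: nonpos_Ints_cases)
  hence "Gamma (a+1) = a * Gamma a" by (rule Gamma_plus1)
  moreover have "Gamma a \<noteq> 0" using Gamma_real_pos[OF assms] by simp
  ultimately show ?thesis unfolding Beta_def using assms by (simp add: field_simps)
qed

lemma A4_has_integral:
  fixes l \<theta> p :: real
  assumes \<theta>: "\<theta> > 0" and p: "p > 0" and l: "0 < l" "l < 1"
  shows "((\<lambda>t. \<bar>t powr \<theta> - l\<bar> powr p) has_integral A4 \<theta> l p) {0..1}"
proof -
  define \<mu> where "\<mu> = l powr (1/\<theta>)"
  define H where "H = (\<lambda>t::real. t powr (p + 1 - 1) * (1 - t) powr (p + 2 - (p + 1) - 1)
                     * (1 - (1 - l) * t) powr (- (1/\<theta> + p + 1)))"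
  let ?F = "\<lambda>t. \<bar>t powr \<theta> - l\<bar> powr p"
  define C where "C = l powr (1/\<theta> + p) / \<theta> * (1-l) powr (p+1)"
  have C0: "C > 0" unfolding C_def using l \<theta> by simp
  have mu0: "\<mu> > 0" unfolding \<mu>_def using l by simp
  note P1 = piece1[OF \<theta> p l, folded \<mu>_def]
  note P2 = piece2[OF \<theta> p l, folded \<mu>_def]
  have "?F integrable_on {\<mu>..1}"
    by (rule integrable_continuous_real, rule continuous_on_subset[OF cont_abs_powr[OF \<theta> p]])
       (use mu0 in auto)
  hence "(?F has_integral integral {\<mu>..1} ?F) {\<mu>..1}" by (rule integrable_integral)
  with P1 have tot: "(?F has_integral (l powr (1/\<theta> + p) / \<theta> * Beta (1/\<theta>) (p+1) + integral {\<mu>..1} ?F)) {0..1}"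
    by (intro has_integral_combine[of 0 \<mu> 1]) (use mu0 P2(2) in auto)
  have HI: "(H has_integral integral {\<mu>..1} ?F / C) {0..1}"
  proof -
    have "((\<lambda>x. l powr (1/\<theta> + p) / \<theta> * (1-l) powr (p+1) * H x / C) has_integral integral{\<mu>..1} ?F / C) {0..1}"
      using has_integral_divide[OF P2(1), of C] unfolding H_def .
    hence "((\<lambda>x. C * H x / C) has_integral integral{\<mu>..1} ?F / C) {0..1}" by (simp only: C_def)
    thus ?thesis using C0 by simp
  qed
  have Hnn: "H t \<ge> 0" if "t \<in> {0..1}" for t unfolding H_def by simp
  have "H absolutely_integrable_on {0..1}"
    using HI Hnn by (intro nonnegative_absolutely_integrable_1) (auto simp: integrable_on_def)
  moreover have "(\<lambda>x. indicator {0..1} x * H x) \<in> borel_measurable borel"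
    unfolding H_def by measurable
  ultimately have "(LBINT t:{0..1}. H t) = integral {0..1} H"
    by (rule lborel_set_eq_integral(1))
  also have "\<dots> = integral {\<mu>..1} ?F / C" using HI by (rule integral_unique)
  finally have LB: "(LBINT t:{0..1}. H t) = integral {\<mu>..1} ?F / C" .
  have hyp: "hyp2F1 (1 / \<theta> + p + 1) (p + 1) (p + 2) (1 - l) = (LBINT t:{0..1}. H t) / Beta (p+1) (p + 2 - (p + 1))"
    unfolding hyp2F1_def H_def by simp
  have B1: "Beta (p+1) (p + 2 - (p + 1)) = 1 / (p+1)" using p by (simp add: Beta_a1)
  have ex: "(\<theta> * p + 1) / \<theta> = 1/\<theta> + p" using \<theta> by (simp add: field_simps)
  have "A4 \<theta> l p = l powr (1/\<theta> + p) / \<theta> * Beta (1/\<theta>) (p+1) + integral {\<mu>..1} ?F"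
  proof -
    define X where "X = l powr (1/\<theta> + p)"
    define Y where "Y = (1-l) powr (p+1)"
    have X: "X > 0" "Y > 0" using l unfolding X_def Y_def by auto
    show ?thesis
    proof -
      let ?I = "integral {\<mu>..1} ?F"
      have "Y / (p+1) * ((?I / (X / \<theta> * Y)) / (1 / (p+1))) = Y * (?I / (X / \<theta> * Y))"
        using p by simp
      also have "\<dots> = ?I * \<theta> / X" using X \<theta> by (simp add: field_simps)
      finally have "Y / (p+1) * ((?I / (X / \<theta> * Y)) / (1 / (p+1))) = ?I * \<theta> / X" .
      moreover have "X / \<theta> * (Beta (1/\<theta>) (p+1) + ?I * \<theta> / X) = X / \<theta> * Beta (1/\<theta>) (p+1) + ?I"
        using X \<theta> by (simp add: field_simps)
      ultimately show ?thesis
        unfolding A4_def hyp B1 LB ex C_def X_def[symmetric] Y_def[symmetric] by simp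
    qed
  qed
  with tot show ?thesis by simp
qed

lemma ibp:
  fixes \<phi> \<psi> :: "real \<Rightarrow> real" and \<theta> M :: real
  assumes \<theta>: "\<theta> > 0"
    and der: "\<And>t. t \<in> {0..1} \<Longrightarrow> (\<phi> has_real_derivative \<psi> t) (at t)"
    and bnd: "\<And>t. t \<in> {0..1} \<Longrightarrow> \<bar>\<psi> t\<bar> \<le> M"
  shows "(\<lambda>t. (t powr \<theta> - 1/3) * \<psi> t) absolutely_integrable_on {0..1}"
    "\<psi> \<in> borel_measurable (lebesgue_on {0..1})"
    "(\<lambda>t. t powr (\<theta>-1) * \<phi> t) absolutely_integrable_on {0..1}"
    "\<theta> * integral {0..1} (\<lambda>t. t powr (\<theta>-1) * \<phi> t) + integral {0..1} (\<lambda>t. (t powr \<theta> - 1/3) * \<psi> t)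
       = 2/3 * \<phi> 1 + 1/3 * \<phi> 0"
proof -
  let ?K = "\<lambda>t::real. t powr \<theta> - 1/3"
  have "(\<psi> has_integral (\<phi> 1 - \<phi> 0)) {0..1}"
    by (rule fundamental_theorem_of_calculus)
       (auto intro!: has_field_derivative_at_within der simp: has_real_derivative_iff_has_vector_derivative[symmetric])
  hence "\<psi> integrable_on {0..1}" by blast
  thus mpsi: "\<psi> \<in> borel_measurable (lebesgue_on {0..1})" by (rule integrable_imp_measurable)
  have psiai: "\<psi> absolutely_integrable_on {0..1}"
    by (rule measurable_bounded_by_integrable_imp_absolutely_integrable[OF mpsi, of "\<lambda>_. M"])
       (use bnd in auto)
  have contK: "continuous_on {0..1} ?K"
    using \<theta> by (intro continuous_intros continuous_on_powr') auto
  show A1: "(\<lambda>t. ?K t * \<psi> t) absolutely_integrable_on {0..1}"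
  proof (rule absolutely_integrable_bounded_measurable_product_real[OF _ _ _ psiai])
    show "?K \<in> borel_measurable (lebesgue_on {0..1})"
      by (rule continuous_imp_measurable_on_sets_lebesgue[OF contK]) auto
    show "bounded (?K ` {0..1})"
      by (rule compact_imp_bounded, rule compact_continuous_image[OF contK]) auto
  qed auto
  have contphi: "continuous_on {0..1} \<phi>"
    by (intro continuous_at_imp_continuous_on ballI DERIV_isCont[OF der]) auto
  have P: "((\<lambda>t. \<theta> * t powr (\<theta> - 1) * \<phi> t + ?K t * \<psi> t) has_integral
             (?K 1 * \<phi> 1 - ?K 0 * \<phi> 0)) {0..1}"
  proof (rule fundamental_theorem_of_calculus_interior[of 0 1 "\<lambda>t. ?K t * \<phi> t"])
    show "continuous_on {0..1} (\<lambda>t. ?K t * \<phi> t)"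
      by (intro continuous_on_mult contK contphi)
    fix t :: real assume t: "t \<in> {0<..<1}"
    have "((\<lambda>t. ?K t * \<phi> t) has_real_derivative (\<theta> * t powr (\<theta> - 1) * \<phi> t + ?K t * \<psi> t)) (at t)"
      using t der[of t]
      by (auto intro!: derivative_eq_intros simp: algebra_simps)
    thus "((\<lambda>t. ?K t * \<phi> t) has_vector_derivative (\<theta> * t powr (\<theta> - 1) * \<phi> t + ?K t * \<psi> t)) (at t)"
      by (simp add: has_real_derivative_iff_has_vector_derivative)
  qed auto
  have v: "?K 1 * \<phi> 1 - ?K 0 * \<phi> 0 = 2/3 * \<phi> 1 + 1/3 * \<phi> 0" by simp
  have I2: "((\<lambda>t. ?K t * \<psi> t) has_integral integral {0..1} (\<lambda>t. ?K t * \<psi> t)) {0..1}"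
    using A1 set_lebesgue_integral_eq_integral(1) integrable_integral by blast
  have "((\<lambda>t. (\<theta> * t powr (\<theta> - 1) * \<phi> t + ?K t * \<psi> t) - ?K t * \<psi> t) has_integral
          (2/3 * \<phi> 1 + 1/3 * \<phi> 0 - integral {0..1} (\<lambda>t. ?K t * \<psi> t))) {0..1}"
    using has_integral_diff[OF P I2] unfolding v .
  hence Q: "((\<lambda>t. \<theta> * (t powr (\<theta> - 1) * \<phi> t)) has_integral
          (2/3 * \<phi> 1 + 1/3 * \<phi> 0 - integral {0..1} (\<lambda>t. ?K t * \<psi> t))) {0..1}"
    by (simp add: mult.assoc)
  hence Q2: "((\<lambda>t. t powr (\<theta> - 1) * \<phi> t) has_integral
          (2/3 * \<phi> 1 + 1/3 * \<phi> 0 - integral {0..1} (\<lambda>t. ?K t * \<psi> t)) / \<theta>) {0..1}"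
    using has_integral_divide[OF Q, of \<theta>] \<theta> by simp
  obtain B where B: "\<And>t. t \<in> {0..1} \<Longrightarrow> \<bar>\<phi> t\<bar> \<le> B"
    using compact_imp_bounded[OF compact_continuous_image[OF contphi]]
    unfolding bounded_iff by force
  show "(\<lambda>t. t powr (\<theta>-1) * \<phi> t) absolutely_integrable_on {0..1}"
  proof (rule absolutely_integrable_integrable_bound[of _ _ "\<lambda>t. B * t powr (\<theta>-1)"])
    show "(\<lambda>t. t powr (\<theta>-1) * \<phi> t) integrable_on {0..1}" using Q2 by blast
    have "((\<lambda>t. t powr (\<theta>-1)) has_integral (1 powr (\<theta>-1+1) / (\<theta>-1+1))) {0..1}"
      by (rule has_integral_powr_from_0) (use \<theta> in auto)
    thus "(\<lambda>t. B * t powr (\<theta>-1)) integrable_on {0..1}"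
      using integrable_cmul[of "\<lambda>t. t powr (\<theta>-1)" "{0..1}" B] by auto
    fix t :: real assume t: "t \<in> {0..1}"
    show "norm (t powr (\<theta>-1) * \<phi> t) \<le> B * t powr (\<theta>-1)"
      using mult_right_mono[OF B[OF t], of "t powr (\<theta>-1)"] by (simp add: abs_mult mult.commute)
  qed
  show "\<theta> * integral {0..1} (\<lambda>t. t powr (\<theta>-1) * \<phi> t) + integral {0..1} (\<lambda>t. (t powr \<theta> - 1/3) * \<psi> t)
       = 2/3 * \<phi> 1 + 1/3 * \<phi> 0"
    using integral_unique[OF Q2] \<theta> by simp
qed

lemma pow0_bounds:
  assumes "t \<in> {0..1}" "\<alpha> \<ge> 0"
  shows "0 \<le> pow0 t \<alpha>" "pow0 t \<alpha> \<le> 1"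
  using assms unfolding pow0_def by (auto intro: powr_le1)

lemma pow0_int:
  assumes "\<alpha> \<ge> 0"
  shows "((\<lambda>t. pow0 t \<alpha>) has_integral 1/(\<alpha>+1)) {0..1}"
proof -
  have "((\<lambda>t. t powr \<alpha>) has_integral (1 powr (\<alpha>+1) / (\<alpha>+1))) {0..1}"
    by (rule has_integral_powr_from_0) (use assms in auto)
  hence "((\<lambda>t. t powr \<alpha>) has_integral 1/(\<alpha>+1)) {0..1}" by simp
  show ?thesis
    by (rule has_integral_spike_finite[of "{0}" _ _ "\<lambda>t. t powr \<alpha>"]) (use \<open>((\<lambda>t. t powr \<alpha>) has_integral 1/(\<alpha>+1)) {0..1}\<close> in \<open>auto simp: pow0_def\<close>)
qed

lemma side_bound:
  fixes g :: "real \<Rightarrow> real" and p q \<theta> \<alpha> m U V :: real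
  assumes pq: "p > 1" "q > 1" "1/p + 1/q = 1" and \<theta>: "\<theta> > 0"
    and \<alpha>: "0 \<le> \<alpha>" and m: "0 < m" and UV: "U \<ge> 0" "V \<ge> 0"
    and gmeas: "g \<in> borel_measurable (lebesgue_on {0..1})"
    and gconv: "\<And>t. t \<in> {0..1} \<Longrightarrow> \<bar>g t\<bar> powr q \<le> pow0 t \<alpha> * U + m * (1 - pow0 t \<alpha>) * V"
  shows "\<bar>integral {0..1} (\<lambda>t. (t powr \<theta> - 1/3) * g t)\<bar>
           \<le> A4 \<theta> (1/3) p powr (1/p) * ((U + \<alpha> * m * V) / (\<alpha> + 1)) powr (1/q)"
proof -
  let ?K = "\<lambda>t::real. t powr \<theta> - 1/3"
  have bq: "\<bar>g t\<bar> powr q \<le> U + m * V" if t: "t \<in> {0..1}" for t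
  proof -
    have "pow0 t \<alpha> * U \<le> U" using pow0_bounds[OF t \<alpha>] UV by (simp add: mult_left_le_one_le)
    moreover have "m * (1 - pow0 t \<alpha>) * V \<le> m * V"
      using pow0_bounds[OF t \<alpha>] UV m by (simp add: mult_left_le_one_le mult_right_le_one_le mult_le_cancel_left1)
    ultimately show ?thesis using gconv[OF t] by linarith
  qed
  have gb: "\<bar>g t\<bar> \<le> (U + m * V) powr (1/q)" if t: "t \<in> {0..1}" for t
  proof -
    have "\<bar>g t\<bar> = (\<bar>g t\<bar> powr q) powr (1/q)" using pq by (simp add: powr_powr)
    also have "\<dots> \<le> (U + m * V) powr (1/q)" using bq[OF t] pq by (intro powr_mono2) auto
    finally show ?thesis .
  qed
  have gai: "g absolutely_integrable_on {0..1}"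
    by (rule measurable_bounded_by_integrable_imp_absolutely_integrable[OF gmeas, of "\<lambda>_. (U + m * V) powr (1/q)"])
       (use gb in auto)
  have contK: "continuous_on {0..1} ?K"
    using \<theta> by (intro continuous_intros continuous_on_powr') auto
  have Kg: "(\<lambda>t. ?K t * g t) absolutely_integrable_on {0..1}"
  proof (rule absolutely_integrable_bounded_measurable_product_real[OF _ _ _ gai])
    show "?K \<in> borel_measurable (lebesgue_on {0..1})"
      by (rule continuous_imp_measurable_on_sets_lebesgue[OF contK]) auto
    show "bounded (?K ` {0..1})"
      by (rule compact_imp_bounded, rule compact_continuous_image[OF contK]) auto
  qed auto
  have Kgi: "(\<lambda>t. ?K t * g t) integrable_on {0..1}" and Kgni: "(\<lambda>t. \<bar>?K t * g t\<bar>) integrable_on {0..1}"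
    using Kg unfolding absolutely_integrable_on_def by auto
  have "\<bar>integral {0..1} (\<lambda>t. ?K t * g t)\<bar> \<le> integral {0..1} (\<lambda>t. \<bar>?K t\<bar> * \<bar>g t\<bar>)"
    using integral_norm_bound_integral[OF Kgi Kgni] by (simp add: abs_mult)
  also have "\<dots> \<le> integral {0..1} (\<lambda>t. \<bar>?K t\<bar> powr p) powr (1/p) * integral {0..1} (\<lambda>t. \<bar>g t\<bar> powr q) powr (1/q)"
  proof (rule holder01[OF pq])
    show "(\<lambda>t. \<bar>?K t\<bar> powr p) integrable_on {0..1}"
      using A4_has_integral[of \<theta> p "1/3"] \<theta> pq by auto
    have "(\<lambda>t. \<bar>g t\<bar> powr q) \<in> borel_measurable (lebesgue_on {0..1})"
      using gmeas by measurable
    thus "(\<lambda>t. \<bar>g t\<bar> powr q) integrable_on {0..1}"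
      using measurable_bounded_by_integrable_imp_absolutely_integrable[of "\<lambda>t. \<bar>g t\<bar> powr q" "{0..1}" "\<lambda>_. U + m * V"]
        bq unfolding absolutely_integrable_on_def by auto
    show "(\<lambda>t. \<bar>?K t\<bar> * \<bar>g t\<bar>) integrable_on {0..1}" using Kgni by (simp add: abs_mult)
  qed auto
  also have "\<dots> = A4 \<theta> (1/3) p powr (1/p) * integral {0..1} (\<lambda>t. \<bar>g t\<bar> powr q) powr (1/q)"
  proof -
    have IA: "integral {0..1} (\<lambda>t. \<bar>?K t\<bar> powr p) = A4 \<theta> (1/3) p"
      using A4_has_integral[of \<theta> p "1/3"] \<theta> pq integral_unique by auto
    thus ?thesis by simp
  qed
  also have "\<dots> \<le> A4 \<theta> (1/3) p powr (1/p) * ((U + \<alpha> * m * V) / (\<alpha> + 1)) powr (1/q)"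
  proof (rule mult_left_mono)
    show "0 \<le> A4 \<theta> (1/3) p powr (1/p)" by simp
    have "(\<lambda>t. \<bar>g t\<bar> powr q) \<in> borel_measurable (lebesgue_on {0..1})"
      using gmeas by measurable
    hence gqi: "(\<lambda>t. \<bar>g t\<bar> powr q) integrable_on {0..1}"
      using measurable_bounded_by_integrable_imp_absolutely_integrable[of "\<lambda>t. \<bar>g t\<bar> powr q" "{0..1}" "\<lambda>_. U + m * V"]
        bq unfolding absolutely_integrable_on_def by auto
    have bI: "((\<lambda>t. pow0 t \<alpha> * U + m * (1 - pow0 t \<alpha>) * V) has_integral
               (1/(\<alpha>+1) * U + m * (1 - 1/(\<alpha>+1)) * V)) {0..1}"
    proof -
      have P: "((\<lambda>t. pow0 t \<alpha>) has_integral 1/(\<alpha>+1)) {0..1}" by (rule pow0_int[OF \<alpha>])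
      have "((\<lambda>t. pow0 t \<alpha> * U) has_integral 1/(\<alpha>+1) * U) {0..1}"
        by (rule has_integral_mult_left[OF P])
      moreover have "((\<lambda>t. 1 - pow0 t \<alpha>) has_integral 1 - 1/(\<alpha>+1)) {0..1}"
        using has_integral_diff[OF has_integral_const_real[of 1 0 1] P] by simp
      hence "((\<lambda>t. m * (1 - pow0 t \<alpha>) * V) has_integral m * (1 - 1/(\<alpha>+1)) * V) {0..1}"
        using has_integral_mult_left[OF has_integral_mult_right[of _ _ _ m], of _ _ _ V] by auto
      ultimately show ?thesis by (rule has_integral_add)
    qed
    have "integral {0..1} (\<lambda>t. \<bar>g t\<bar> powr q) \<le> 1/(\<alpha>+1) * U + m * (1 - 1/(\<alpha>+1)) * V"
    proof -
      have "integral {0..1} (\<lambda>t. \<bar>g t\<bar> powr q) \<le> integral {0..1} (\<lambda>t. pow0 t \<alpha> * U + m * (1 - pow0 t \<alpha>) * V)"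
        by (rule integral_le[OF gqi]) (use bI gconv in auto)
      also have "\<dots> = 1/(\<alpha>+1) * U + m * (1 - 1/(\<alpha>+1)) * V" by (rule integral_unique[OF bI])
      finally show ?thesis .
    qed
    also have "\<dots> = (U + \<alpha> * m * V) / (\<alpha> + 1)"
    proof -
      have a1: "\<alpha> + 1 > 0" using \<alpha> by simp
      have h: "1 - 1/(\<alpha>+1) = \<alpha>/(\<alpha>+1)" using a1 by (simp add: field_simps)
      have "1/(\<alpha>+1) * U + m * (\<alpha>/(\<alpha>+1)) * V = U/(\<alpha>+1) + (\<alpha>*m*V)/(\<alpha>+1)" by simp
      also have "\<dots> = (U + \<alpha>*m*V)/(\<alpha>+1)" by (simp add: add_divide_distrib)
      finally show ?thesis unfolding h .
    qed
    finally have "integral {0..1} (\<lambda>t. \<bar>g t\<bar> powr q) powr (1/q) \<le> ((U + \<alpha> * m * V) / (\<alpha> + 1)) powr (1/q)"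
      using pq by (intro powr_mono2) (auto intro!: integral_nonneg gqi)
    thus "integral {0..1} (\<lambda>t. \<bar>g t\<bar> powr q) powr (1/q) \<le> ((U + \<alpha> * m * V) / (\<alpha> + 1)) powr (1/q)" .
  qed
  finally show ?thesis .
qed

lemma conv_bound:
  assumes q: "q > 1" and \<alpha>: "0 \<le> \<alpha>" and m: "0 < m" and UV: "U \<ge> 0" "V \<ge> 0"
    and t: "t \<in> {0..1}"
    and c: "\<bar>x\<bar> powr q \<le> pow0 t \<alpha> * U + m * (1 - pow0 t \<alpha>) * V"
  shows "\<bar>x\<bar> \<le> (U + m * V) powr (1/q)"
proof -
  have "pow0 t \<alpha> * U \<le> U" using pow0_bounds[OF t \<alpha>] UV by (simp add: mult_left_le_one_le)
  moreover have "m * (1 - pow0 t \<alpha>) * V \<le> m * V"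
    using pow0_bounds[OF t \<alpha>] UV m by (simp add: mult_left_le_one_le mult_right_le_one_le mult_le_cancel_left1)
  ultimately have bq: "\<bar>x\<bar> powr q \<le> U + m * V" using c by linarith
  have "\<bar>x\<bar> = (\<bar>x\<bar> powr q) powr (1/q)" using q by (simp add: powr_powr)
  also have "\<dots> \<le> (U + m * V) powr (1/q)" using bq q by (intro powr_mono2) auto
  finally show ?thesis .
qed

lemma LBINT_affine:
  fixes F :: "real \<Rightarrow> real" and A h :: real
  assumes h: "h > 0"
    and ai: "(\<lambda>x. F (A + h * x)) absolutely_integrable_on {0..1}"
    and meas: "(\<lambda>x. indicator {0..1} x * F (A + h * x)) \<in> borel_measurable borel"
  shows "(LBINT s:{A..A+h}. F s) = h * integral {0..1} (\<lambda>x. F (A + h * x))"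
proof -
  have "(LBINT s:{A..A+h}. F s) = (\<integral>s. indicator {A..A+h} s *\<^sub>R F s \<partial>lborel)"
    by (simp add: set_lebesgue_integral_def)
  also have "\<dots> = \<bar>h\<bar> *\<^sub>R (\<integral>x. indicator {A..A+h} (A + h * x) *\<^sub>R F (A + h * x) \<partial>lborel)"
    using h by (intro lborel_integral_real_affine) simp
  also have "(\<lambda>x. indicator {A..A+h} (A + h * x) *\<^sub>R F (A + h * x)) = (\<lambda>x. indicator {0..1} x *\<^sub>R F (A + h * x))"
  proof
    fix x
    have "(A + h * x \<in> {A..A+h}) = (x \<in> {0..1})"
      using h by (auto simp: mult_le_cancel_left1 mult_le_cancel_left2 zero_le_mult_iff)
    thus "indicator {A..A+h} (A + h * x) *\<^sub>R F (A + h * x) = indicator {0..1} x *\<^sub>R F (A + h * x)"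
      by (simp add: indicator_def)
  qed
  also have "(\<integral>x. indicator {0..1} x *\<^sub>R F (A + h * x) \<partial>lborel) = (LBINT x:{0..1}. F (A + h * x))"
    by (simp add: set_lebesgue_integral_def)
  also have "\<dots> = integral {0..1} (\<lambda>x. F (A + h * x))"
    by (rule lborel_set_eq_integral(1)[OF ai meas])
  finally show ?thesis using h by simp
qed

lemma LBINT_affine_r:
  fixes F :: "real \<Rightarrow> real" and B h :: real
  assumes h: "h > 0"
    and ai: "(\<lambda>x. F (B - h * x)) absolutely_integrable_on {0..1}"
    and meas: "(\<lambda>x. indicator {0..1} x * F (B - h * x)) \<in> borel_measurable borel"
  shows "(LBINT s:{B-h..B}. F s) = h * integral {0..1} (\<lambda>x. F (B - h * x))"
proof -
  have "(LBINT s:{B-h..B}. F s) = (\<integral>s. indicator {B-h..B} s *\<^sub>R F s \<partial>lborel)"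
    by (simp add: set_lebesgue_integral_def)
  also have "\<dots> = \<bar>-h\<bar> *\<^sub>R (\<integral>x. indicator {B-h..B} (B + (-h) * x) *\<^sub>R F (B + (-h) * x) \<partial>lborel)"
    using h by (intro lborel_integral_real_affine) simp
  also have "(\<lambda>x. indicator {B-h..B} (B + (-h) * x) *\<^sub>R F (B + (-h) * x)) = (\<lambda>x. indicator {0..1} x *\<^sub>R F (B - h * x))"
  proof
    fix x
    have "(B + (-h) * x \<in> {B-h..B}) = (x \<in> {0..1})"
      using h by (auto simp: mult_le_cancel_left1 mult_le_cancel_left2 zero_le_mult_iff)
    thus "indicator {B-h..B} (B + (-h) * x) *\<^sub>R F (B + (-h) * x) = indicator {0..1} x *\<^sub>R F (B - h * x)"
      by (simp add: indicator_def)
  qed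
  also have "(\<integral>x. indicator {0..1} x *\<^sub>R F (B - h * x) \<partial>lborel) = (LBINT x:{0..1}. F (B - h * x))"
    by (simp add: set_lebesgue_integral_def)
  also have "\<dots> = integral {0..1} (\<lambda>x. F (B - h * x))"
    by (rule lborel_set_eq_integral(1)[OF ai meas])
  finally show ?thesis using h by simp
qed

theorem mainTheorem11:
  fixes I :: "real set" and f :: "real \<Rightarrow> real"
    and m \<alpha> a b q p \<theta> :: real
  assumes q: "q > 1" and p: "p = q / (q - 1)"
    and I: "is_interval I" "I \<subseteq> {0..}"
    and diff: "\<forall>x\<in>interior I. f differentiable (at x)"
    and m: "0 < m" "m \<le> 1"
    and \<alpha>: "0 \<le> \<alpha>" "\<alpha> \<le> 1"
    and ab: "a < b" "m * a \<in> interior I" "b \<in> interior I"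
    and integ: "set_integrable lborel {m * a..m * b} (deriv f)"
    and conv: "alpha_m_convex \<alpha> m {m * a..b} (\<lambda>x. \<bar>deriv f x\<bar> powr q)"
    and \<theta>: "\<theta> > 0"
  shows "\<bar>(f (m * a) + 4 * f (m * (a + b) / 2) + f (m * b)) / 6
          - Gamma (\<theta> + 1) * 2 powr (\<theta> - 1) / (m powr \<theta> * (b - a) powr \<theta>)
            * (RL_left \<theta> (m * (a + b) / 2) f (m * a) + RL_right \<theta> (m * (a + b) / 2) f (m * b))\<bar>
     \<le> m * (b - a) / 4 * A4 \<theta> (1 / 3) p powr (1 / p)
        * (((\<bar>deriv f (m * (a + b) / 2)\<bar> powr q + \<alpha> * m * \<bar>deriv f a\<bar> powr q) / (\<alpha> + 1)) powr (1 / q)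
         + ((\<bar>deriv f (m * (a + b) / 2)\<bar> powr q + \<alpha> * m * \<bar>deriv f b\<bar> powr q) / (\<alpha> + 1)) powr (1 / q))"
proof -
  define A where "A = m * a"
  define B where "B = m * b"
  define c where "c = m * (a + b) / 2"
  define h where "h = (B - A) / 2"
  define Dc where "Dc = \<bar>deriv f c\<bar> powr q"
  define Da where "Da = \<bar>deriv f a\<bar> powr q"
  define Db where "Db = \<bar>deriv f b\<bar> powr q"
  define K where "K = (\<lambda>t::real. t powr \<theta> - 1/3)"
  have q1: "q - 1 > 0" using q by simp
  have pq: "p > 1" "1/p + 1/q = 1" unfolding p using q1 by (simp_all add: field_simps)
  have "m * a \<ge> 0" using ab(2) I(2) interior_subset by fastforce
  hence a0: "a \<ge> 0" using m by (simp add: zero_le_mult_iff)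
  have h0: "h > 0" unfolding h_def A_def B_def using m ab by simp
  have cA: "c = A + h" and cB: "c = B - h" unfolding c_def h_def A_def B_def by (simp_all add: field_simps)
  have Bb: "B \<le> b" unfolding B_def using m ab a0 by (simp add: mult_left_le_one_le)
  have Aa: "A \<le> a" unfolding A_def using m a0 by (simp add: mult_left_le_one_le)
  have intI: "is_interval (interior I)" using I(1) by (simp add: is_interval_convex_1)
  have sub: "{A..b} \<subseteq> interior I"
  proof
    fix x assume x: "x \<in> {A..b}"
    have iv: "\<forall>a\<in>interior I. \<forall>b\<in>interior I. \<forall>x. a \<le> x \<and> x \<le> b \<longrightarrow> x \<in> interior I"
      using intI by (simp only: is_interval_1)
    show "x \<in> interior I"
      by (rule iv[rule_format, of A b x]) (use x ab in \<open>simp_all add: A_def\<close>)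
  qed
  have D: "(f has_real_derivative deriv f x) (at x)" if "x \<in> {A..b}" for x
  proof -
    have "f differentiable (at x)" using diff sub that by blast
    thus ?thesis using DERIV_deriv_iff_has_field_derivative real_differentiable_def by blast
  qed
  have convI: "\<And>X Y t. X \<in> {A..b} \<Longrightarrow> Y \<in> {A..b} \<Longrightarrow> t \<in> {0..1} \<Longrightarrow> t * X + m * (1 - t) * Y \<in> {A..b} \<Longrightarrow>
      \<bar>deriv f (t * X + m * (1 - t) * Y)\<bar> powr q \<le> pow0 t \<alpha> * \<bar>deriv f X\<bar> powr q + m * (1 - pow0 t \<alpha>) * \<bar>deriv f Y\<bar> powr q"
    using conv unfolding alpha_m_convex_def A_def by blast
  have cin: "c \<in> {A..b}" using cA cB h0 Bb by auto
  have ain: "a \<in> {A..b}" using Aa ab by auto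
  have bin: "b \<in> {A..b}" using Aa ab by auto
  have seg1: "A + h * t \<in> {A..b}" if "t \<in> {0..1}" for t
  proof -
    have 1: "h * t \<le> h" using that h0 by (simp add: mult_left_le)
    have 2: "0 \<le> h * t" using that h0 by simp
    have 3: "c \<le> b" using cin by simp
    show ?thesis unfolding atLeastAtMost_iff using 1 2 3 cA by linarith
  qed
  have seg2: "B - h * t \<in> {A..b}" if "t \<in> {0..1}" for t
  proof -
    have 1: "h * t \<le> h" using that h0 by (simp add: mult_left_le)
    have 2: "0 \<le> h * t" using that h0 by simp
    have 3: "A \<le> c" using cin by simp
    show ?thesis unfolding atLeastAtMost_iff using 1 2 3 cB Bb by linarith
  qed
  have gconv1: "\<bar>deriv f (A + h * t)\<bar> powr q \<le> pow0 t \<alpha> * Dc + m * (1 - pow0 t \<alpha>) * Da"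
    if t: "t \<in> {0..1}" for t
  proof -
    have e: "t * c + m * (1 - t) * a = A + h * t"
      unfolding c_def h_def A_def B_def by (simp add: field_simps)
    show ?thesis using convI[OF cin ain t] e seg1[OF t] unfolding Dc_def Da_def by simp
  qed
  have gconv2: "\<bar>deriv f (B - h * t)\<bar> powr q \<le> pow0 t \<alpha> * Dc + m * (1 - pow0 t \<alpha>) * Db"
    if t: "t \<in> {0..1}" for t
  proof -
    have e: "t * c + m * (1 - t) * b = B - h * t"
      unfolding c_def h_def A_def B_def by (simp add: field_simps)
    show ?thesis using convI[OF cin bin t] e seg2[OF t] unfolding Dc_def Db_def by simp
  qed
  have DcDa: "Dc \<ge> 0" "Da \<ge> 0" "Db \<ge> 0" unfolding Dc_def Da_def Db_def by auto
  define \<phi>1 where "\<phi>1 = (\<lambda>t. f (A + h * t))"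
  define \<psi>1 where "\<psi>1 = (\<lambda>t. deriv f (A + h * t) * h)"
  define \<phi>2 where "\<phi>2 = (\<lambda>t. f (B - h * t))"
  define \<psi>2 where "\<psi>2 = (\<lambda>t. deriv f (B - h * t) * (- h))"
  have der1: "(\<phi>1 has_real_derivative \<psi>1 t) (at t)" if t: "t \<in> {0..1}" for t
    unfolding \<phi>1_def \<psi>1_def
    by (rule DERIV_chain2[of f "deriv f (A + h * t)" "\<lambda>t. A + h * t" t, OF D[OF seg1[OF t]]]) (auto intro!: derivative_eq_intros)
  have der2: "(\<phi>2 has_real_derivative \<psi>2 t) (at t)" if t: "t \<in> {0..1}" for t
    unfolding \<phi>2_def \<psi>2_def
    by (rule DERIV_chain2[of f "deriv f (B - h * t)" "\<lambda>t. B - h * t" t, OF D[OF seg2[OF t]]]) (auto intro!: derivative_eq_intros)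
  have bnd1: "\<bar>\<psi>1 t\<bar> \<le> (Dc + m * Da) powr (1/q) * h" if t: "t \<in> {0..1}" for t
    unfolding \<psi>1_def using conv_bound[OF q \<alpha>(1) m(1) DcDa(1,2) t gconv1[OF t]] h0
    by (simp add: abs_mult mult_right_mono)
  have bnd2: "\<bar>\<psi>2 t\<bar> \<le> (Dc + m * Db) powr (1/q) * h" if t: "t \<in> {0..1}" for t
    unfolding \<psi>2_def using conv_bound[OF q \<alpha>(1) m(1) DcDa(1,3) t gconv2[OF t]] h0
    by (simp add: abs_mult mult_right_mono)
  note ibp1 = ibp[OF \<theta> der1 bnd1]
  note ibp2 = ibp[OF \<theta> der2 bnd2]
  define g1 where "g1 = (\<lambda>t. deriv f (A + h * t))"
  define g2 where "g2 = (\<lambda>t. deriv f (B - h * t))"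
  have g1m: "g1 \<in> borel_measurable (lebesgue_on {0..1})"
  proof -
    have "(\<lambda>t. \<psi>1 t / h) \<in> borel_measurable (lebesgue_on {0..1})" using ibp1(2) by measurable
    moreover have "(\<lambda>t. \<psi>1 t / h) = g1" unfolding \<psi>1_def g1_def using h0 by auto
    ultimately show ?thesis by simp
  qed
  have g2m: "g2 \<in> borel_measurable (lebesgue_on {0..1})"
  proof -
    have "(\<lambda>t. - (\<psi>2 t / h)) \<in> borel_measurable (lebesgue_on {0..1})" using ibp2(2) by measurable
    moreover have "(\<lambda>t. - (\<psi>2 t / h)) = g2" unfolding \<psi>2_def g2_def using h0 by auto
    ultimately show ?thesis by simp
  qed
  define JJ1 where "JJ1 = integral {0..1} (\<lambda>t. (t powr \<theta> - 1/3) * g1 t)"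
  define JJ2 where "JJ2 = integral {0..1} (\<lambda>t. (t powr \<theta> - 1/3) * g2 t)"
  have SB1: "\<bar>JJ1\<bar> \<le> A4 \<theta> (1/3) p powr (1/p) * ((Dc + \<alpha> * m * Da) / (\<alpha> + 1)) powr (1/q)"
    unfolding JJ1_def
    by (rule side_bound[OF pq(1) q pq(2) \<theta> \<alpha>(1) m(1) DcDa(1,2) g1m]) (use gconv1 in \<open>simp add: g1_def\<close>)
  have SB2: "\<bar>JJ2\<bar> \<le> A4 \<theta> (1/3) p powr (1/p) * ((Dc + \<alpha> * m * Db) / (\<alpha> + 1)) powr (1/q)"
    unfolding JJ2_def
    by (rule side_bound[OF pq(1) q pq(2) \<theta> \<alpha>(1) m(1) DcDa(1,3) g2m]) (use gconv2 in \<open>simp add: g2_def\<close>)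
  have J1: "integral {0..1} (\<lambda>t. (t powr \<theta> - 1/3) * \<psi>1 t) = h * JJ1"
  proof -
    have "integral {0..1} (\<lambda>t. (t powr \<theta> - 1/3) * \<psi>1 t) = integral {0..1} (\<lambda>t. h *\<^sub>R ((t powr \<theta> - 1/3) * g1 t))"
      unfolding \<psi>1_def g1_def by (simp add: mult_ac)
    thus ?thesis unfolding JJ1_def by simp
  qed
  have J2: "integral {0..1} (\<lambda>t. (t powr \<theta> - 1/3) * \<psi>2 t) = - h * JJ2"
  proof -
    have "integral {0..1} (\<lambda>t. (t powr \<theta> - 1/3) * \<psi>2 t) = integral {0..1} (\<lambda>t. (-h) *\<^sub>R ((t powr \<theta> - 1/3) * g2 t))"
      unfolding \<psi>2_def g2_def by (simp add: mult_ac)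
    thus ?thesis unfolding JJ2_def by simp
  qed
  define I1 where "I1 = integral {0..1} (\<lambda>t. t powr (\<theta>-1) * \<phi>1 t)"
  define I2 where "I2 = integral {0..1} (\<lambda>t. t powr (\<theta>-1) * \<phi>2 t)"
  have E1: "\<theta> * I1 + h * JJ1 = 2/3 * f c + 1/3 * f A"
    using ibp1(4) unfolding I1_def J1 by (simp add: \<phi>1_def cA)
  have E2: "\<theta> * I2 - h * JJ2 = 2/3 * f c + 1/3 * f B"
    using ibp2(4) unfolding I2_def J2 by (simp add: \<phi>2_def cB)
  have cont1: "continuous_on {0..1} \<phi>1"
    by (intro continuous_at_imp_continuous_on ballI DERIV_isCont[OF der1]) auto
  have cont2: "continuous_on {0..1} \<phi>2"
    by (intro continuous_at_imp_continuous_on ballI DERIV_isCont[OF der2]) auto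
  have pw: "(h * x) powr (\<theta> - 1) = h powr (\<theta> - 1) * x powr (\<theta> - 1)" if "x \<in> {0..1}" for x
    using h0 that by (simp add: powr_mult)
  have hh: "h * (h powr (\<theta> - 1) * I) = h powr \<theta> * I" for I
  proof -
    have "h powr \<theta> = h powr (\<theta> - 1 + 1)" by simp
    also have "\<dots> = h powr (\<theta> - 1) * h powr 1" by (rule powr_add)
    also have "\<dots> = h powr (\<theta> - 1) * h" using h0 by simp
    finally show ?thesis by simp
  qed
  have RL1: "(LBINT s:{A..c}. (s - A) powr (\<theta> - 1) * f s) = h powr \<theta> * I1"
  proof -
    let ?F = "\<lambda>s. (s - A) powr (\<theta> - 1) * f s"
    have ai: "(\<lambda>x. ?F (A + h * x)) absolutely_integrable_on {0..1}"
    proof -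
      have "set_integrable lebesgue {0..1} (\<lambda>t. h powr (\<theta>-1) * (t powr (\<theta>-1) * \<phi>1 t))"
        using ibp1(3) by (intro set_integrable_mult_right) auto
      moreover have "set_integrable lebesgue {0..1} (\<lambda>t. h powr (\<theta>-1) * (t powr (\<theta>-1) * \<phi>1 t))
          = set_integrable lebesgue {0..1} (\<lambda>x. ?F (A + h * x))"
        by (rule set_integrable_cong) (auto simp: pw \<phi>1_def)
      ultimately show ?thesis by simp
    qed
    have mi: "(\<lambda>x. indicator {0..1} x *\<^sub>R \<phi>1 x) \<in> borel_measurable borel"
      by (rule borel_measurable_continuous_on_indicator[OF _ cont1]) auto
    have "(\<lambda>x. (A + h * x - A) powr (\<theta> - 1) * (indicator {0..1} x *\<^sub>R \<phi>1 x)) \<in> borel_measurable borel"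
      by (intro borel_measurable_times mi) measurable
    moreover have "(\<lambda>x. (A + h * x - A) powr (\<theta> - 1) * (indicator {0..1} x *\<^sub>R \<phi>1 x))
                  = (\<lambda>x. indicator {0..1} x * ?F (A + h * x))"
      by (auto simp: \<phi>1_def indicator_def)
    ultimately have meas: "(\<lambda>x. indicator {0..1} x * ?F (A + h * x)) \<in> borel_measurable borel" by simp
    have "(LBINT s:{A..c}. ?F s) = h * integral {0..1} (\<lambda>x. ?F (A + h * x))"
      unfolding cA by (rule LBINT_affine[OF h0 ai meas])
    also have "integral {0..1} (\<lambda>x. ?F (A + h * x)) = integral {0..1} (\<lambda>t. h powr (\<theta>-1) *\<^sub>R (t powr (\<theta>-1) * \<phi>1 t))"
      by (rule integral_cong) (auto simp: pw \<phi>1_def)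
    also have "\<dots> = h powr (\<theta>-1) * I1" unfolding I1_def by simp
    finally show ?thesis using hh by simp
  qed
  have RL2: "(LBINT s:{c..B}. (B - s) powr (\<theta> - 1) * f s) = h powr \<theta> * I2"
  proof -
    let ?F = "\<lambda>s. (B - s) powr (\<theta> - 1) * f s"
    have ai: "(\<lambda>x. ?F (B - h * x)) absolutely_integrable_on {0..1}"
    proof -
      have "set_integrable lebesgue {0..1} (\<lambda>t. h powr (\<theta>-1) * (t powr (\<theta>-1) * \<phi>2 t))"
        using ibp2(3) by (intro set_integrable_mult_right) auto
      moreover have "set_integrable lebesgue {0..1} (\<lambda>t. h powr (\<theta>-1) * (t powr (\<theta>-1) * \<phi>2 t))
          = set_integrable lebesgue {0..1} (\<lambda>x. ?F (B - h * x))"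
        by (rule set_integrable_cong) (auto simp: pw \<phi>2_def)
      ultimately show ?thesis by simp
    qed
    have mi: "(\<lambda>x. indicator {0..1} x *\<^sub>R \<phi>2 x) \<in> borel_measurable borel"
      by (rule borel_measurable_continuous_on_indicator[OF _ cont2]) auto
    have "(\<lambda>x. (B - (B - h * x)) powr (\<theta> - 1) * (indicator {0..1} x *\<^sub>R \<phi>2 x)) \<in> borel_measurable borel"
      by (intro borel_measurable_times mi) measurable
    moreover have "(\<lambda>x. (B - (B - h * x)) powr (\<theta> - 1) * (indicator {0..1} x *\<^sub>R \<phi>2 x))
                  = (\<lambda>x. indicator {0..1} x * ?F (B - h * x))"
      by (auto simp: \<phi>2_def indicator_def)
    ultimately have meas: "(\<lambda>x. indicator {0..1} x * ?F (B - h * x)) \<in> borel_measurable borel" by simp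
    have "(LBINT s:{c..B}. ?F s) = h * integral {0..1} (\<lambda>x. ?F (B - h * x))"
      unfolding cB by (rule LBINT_affine_r[OF h0 ai meas])
    also have "integral {0..1} (\<lambda>x. ?F (B - h * x)) = integral {0..1} (\<lambda>t. h powr (\<theta>-1) *\<^sub>R (t powr (\<theta>-1) * \<phi>2 t))"
      by (rule integral_cong) (auto simp: pw \<phi>2_def)
    also have "\<dots> = h powr (\<theta>-1) * I2" unfolding I2_def by simp
    finally show ?thesis using hh by simp
  qed
  have G: "Gamma (\<theta> + 1) = \<theta> * Gamma \<theta>"
  proof -
    have "\<theta> \<notin> \<int>\<^sub>\<le>\<^sub>0" using \<theta> by (auto elim!: nonpos_Ints_cases)
    thus ?thesis by (rule Gamma_plus1)
  qed
  have G0: "Gamma \<theta> > 0" using \<theta> by simp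
  have mb: "m powr \<theta> * (b - a) powr \<theta> = 2 powr \<theta> * h powr \<theta>"
  proof -
    have "m powr \<theta> * (b - a) powr \<theta> = (m * (b - a)) powr \<theta>" using m ab by (simp add: powr_mult)
    also have "m * (b - a) = 2 * h" unfolding h_def A_def B_def by (simp add: algebra_simps)
    also have "(2 * h) powr \<theta> = 2 powr \<theta> * h powr \<theta>" using h0 by (simp add: powr_mult)
    finally show ?thesis .
  qed
  have two: "2 powr (\<theta> - 1) = 2 powr \<theta> / 2" by (simp add: powr_diff)
  have RLl: "RL_left \<theta> c f A = h powr \<theta> * I1 / Gamma \<theta>" unfolding RL_left_def RL1 ..
  have RLr: "RL_right \<theta> c f B = h powr \<theta> * I2 / Gamma \<theta>" unfolding RL_right_def RL2 ..
  have hp: "h powr \<theta> > 0" "2 powr \<theta> > (0::real)" using h0 by auto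
  have coef: "Gamma (\<theta> + 1) * 2 powr (\<theta> - 1) / (m powr \<theta> * (b - a) powr \<theta>)
        * (RL_left \<theta> c f A + RL_right \<theta> c f B) = (\<theta> * I1 + \<theta> * I2) / 2"
    unfolding G mb two RLl RLr using G0 hp by (simp add: field_simps)
  have key: "(f A + 4 * f c + f B) / 6 - (\<theta> * I1 + \<theta> * I2) / 2 = (h * JJ1 - h * JJ2) / 2"
    using E1 E2 by (simp add: field_simps)
  define P where "P = A4 \<theta> (1/3) p powr (1/p)"
  define X1 where "X1 = ((Dc + \<alpha> * m * Da) / (\<alpha> + 1)) powr (1/q)"
  define X2 where "X2 = ((Dc + \<alpha> * m * Db) / (\<alpha> + 1)) powr (1/q)"
  have "\<bar>(h * JJ1 - h * JJ2) / 2\<bar> \<le> h / 2 * (\<bar>JJ1\<bar> + \<bar>JJ2\<bar>)"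
  proof -
    have "\<bar>(h * JJ1 - h * JJ2) / 2\<bar> = h / 2 * \<bar>JJ1 - JJ2\<bar>"
      using h0 by (simp add: abs_mult right_diff_distrib[symmetric])
    also have "\<dots> \<le> h / 2 * (\<bar>JJ1\<bar> + \<bar>JJ2\<bar>)"
      using h0 by (intro mult_left_mono abs_triangle_ineq4) auto
    finally show ?thesis .
  qed
  also have "\<dots> \<le> h / 2 * (P * X1 + P * X2)"
    using SB1 SB2 h0 unfolding P_def X1_def X2_def by (intro mult_left_mono add_mono) auto
  also have "\<dots> = m * (b - a) / 4 * P * (X1 + X2)"
    unfolding h_def A_def B_def by (simp add: field_simps)
  finally have fin: "\<bar>(f A + 4 * f c + f B) / 6 - (\<theta> * I1 + \<theta> * I2) / 2\<bar> \<le> m * (b - a) / 4 * P * (X1 + X2)"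
    unfolding key .
  show ?thesis
    using fin unfolding coef[unfolded A_def B_def c_def] P_def X1_def X2_def Dc_def Da_def Db_def A_def B_def c_def
    by simp
qed

end
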